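(* Let $G=(V,E)$ be a graph with maximum degree at most $\Delta$, let $\beta>20$ with $L=\log_\beta\Delta$ an integer, let $\ell:V\to\{4,\dots,L\}$ be any level assignment, and let $\chi:V\to\mathcal{C}=\{1,\dots,\Delta+1\}$ be any coloring. For any vertex $x$ with $\ell(x)=i$, we have $|B_x\cup U_x|\ge 1+\frac{|\mathcal{N}_x(4,i-1)|}{2}$.
   Context: For a vertex $v$ and $i\le j$, $\mathcal{N}_v(i,j)=\{u:(u,v)\in E,\ i\le\ell(u)\le j\}$ (empty if $i>j$). For a vertex $x$ at level $i=\ell(x)$: $\mathcal{C}^+_x=\{\chi(y): y\in\mathcal{N}_x(i,L)\}$ and $\mathcal{C}_x=\mathcal{C}\setminus\mathcal{C}^+_x$. A color $c\in\mathcal{C}_x$ is blank for $x$ if no vertex of $\mathcal{N}_x(4,i-1)$ has color $c$, and unique for $x$ if exactly one vertex of $\mathcal{N}_x(4,i-1)$ has color $c$. $B_x$ and $U_x$ denote the sets of blank and unique colors for $x$, respectively. *)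

theory Defs
  imports Complex_Main
begin

definition simple_graph :: "'a set \<Rightarrow> ('a \<times> 'a) set \<Rightarrow> bool" where
  "simple_graph V E \<longleftrightarrow> finite V \<and> E \<subseteq> V \<times> V \<and> sym E \<and> irrefl E"

definition degree :: "('a \<times> 'a) set \<Rightarrow> 'a \<Rightarrow> nat" where
  "degree E v = card {u. (u, v) \<in> E}"

definition nbhd :: "('a \<times> 'a) set \<Rightarrow> ('a \<Rightarrow> int) \<Rightarrow> 'a \<Rightarrow> int \<Rightarrow> int \<Rightarrow> 'a set" where
  "nbhd E lev v i j = {u. (u, v) \<in> E \<and> i \<le> lev u \<and> lev u \<le> j}"

definition Cplus :: "('a \<times> 'a) set \<Rightarrow> ('a \<Rightarrow> int) \<Rightarrow> int \<Rightarrow> ('a \<Rightarrow> nat) \<Rightarrow> 'a \<Rightarrow> nat set" where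
  "Cplus E lev L \<chi> x = \<chi> ` nbhd E lev x (lev x) L"

definition Cfree :: "nat \<Rightarrow> ('a \<times> 'a) set \<Rightarrow> ('a \<Rightarrow> int) \<Rightarrow> int \<Rightarrow> ('a \<Rightarrow> nat) \<Rightarrow> 'a \<Rightarrow> nat set" where
  "Cfree \<Delta> E lev L \<chi> x = {1..\<Delta>+1} - Cplus E lev L \<chi> x"

definition blank_colors :: "nat \<Rightarrow> ('a \<times> 'a) set \<Rightarrow> ('a \<Rightarrow> int) \<Rightarrow> int \<Rightarrow> ('a \<Rightarrow> nat) \<Rightarrow> 'a \<Rightarrow> nat set" where
  "blank_colors \<Delta> E lev L \<chi> x =
     {c \<in> Cfree \<Delta> E lev L \<chi> x. card {y \<in> nbhd E lev x 4 (lev x - 1). \<chi> y = c} = 0}"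

definition unique_colors :: "nat \<Rightarrow> ('a \<times> 'a) set \<Rightarrow> ('a \<Rightarrow> int) \<Rightarrow> int \<Rightarrow> ('a \<Rightarrow> nat) \<Rightarrow> 'a \<Rightarrow> nat set" where
  "unique_colors \<Delta> E lev L \<chi> x =
     {c \<in> Cfree \<Delta> E lev L \<chi> x. card {y \<in> nbhd E lev x 4 (lev x - 1). \<chi> y = c} = 1}"

end

theory Submission
  imports Defs
begin

theorem claim2:
  fixes V :: "'a set" and E :: "('a \<times> 'a) set" and \<Delta> :: nat and \<beta> :: real and L :: int
    and lev :: "'a \<Rightarrow> int" and \<chi> :: "'a \<Rightarrow> nat" and x :: 'a
  assumes "simple_graph V E"
    and "\<forall>v\<in>V. degree E v \<le> \<Delta>"
    and "\<beta> > 20"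
    and "real_of_int L = log \<beta> (real \<Delta>)"
    and "\<forall>v\<in>V. lev v \<in> {4..L}"
    and "\<forall>v\<in>V. \<chi> v \<in> {1..\<Delta>+1}"
    and "x \<in> V"
  shows "real (card (blank_colors \<Delta> E lev L \<chi> x \<union> unique_colors \<Delta> E lev L \<chi> x))
           \<ge> 1 + real (card (nbhd E lev x 4 (lev x - 1))) / 2"
proof -
  define A where "A = nbhd E lev x 4 (lev x - 1)"
  define P where "P = nbhd E lev x (lev x) L"
  define C where "C = Cfree \<Delta> E lev L \<chi> x"
  define f where "f c = card {y \<in> A. \<chi> y = c}" for c
  define D where "D = {c \<in> C. 2 \<le> f c}"
  have fV: "finite V" and EV: "E \<subseteq> V \<times> V" using assms(1) unfolding simple_graph_def by auto
  have NE: "finite {u. (u, x) \<in> E}"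
    by (rule finite_subset[of _ V]) (use EV fV in auto)
  have AN: "A \<subseteq> {u. (u, x) \<in> E}" and PN: "P \<subseteq> {u. (u, x) \<in> E}"
    unfolding A_def P_def nbhd_def by auto
  have fA: "finite A" and fP: "finite P" using AN PN NE finite_subset by blast+
  have disj: "A \<inter> P = {}" unfolding A_def P_def nbhd_def by auto
  have "card A + card P = card (A \<union> P)" using card_Un_disjoint[OF fA fP disj] by simp
  also have "\<dots> \<le> card {u. (u, x) \<in> E}" using AN PN NE by (intro card_mono) auto
  also have "\<dots> \<le> \<Delta>" using assms(2,7) unfolding degree_def by auto
  finally have AP: "card A + card P \<le> \<Delta>" .
  have "card {1..\<Delta>+1} - card (\<chi> ` P) \<le> card C"
    unfolding C_def Cfree_def Cplus_def P_def[symmetric] by (rule diff_card_le_card_Diff) (use fP in auto)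
  moreover have "card (\<chi> ` P) \<le> card P" using card_image_le fP by blast
  ultimately have Cge: "\<Delta> + 1 - card P \<le> card C" by simp
  have fC: "finite C" unfolding C_def Cfree_def by auto
  have BU: "blank_colors \<Delta> E lev L \<chi> x \<union> unique_colors \<Delta> E lev L \<chi> x = C - D"
    unfolding blank_colors_def unique_colors_def D_def C_def[symmetric] A_def[symmetric] f_def
    by auto
  have DC: "D \<subseteq> C" unfolding D_def by auto
  have fD: "finite D" using DC fC finite_subset by blast
  have "2 * card D = (\<Sum>c\<in>D. 2)" by simp
  also have "\<dots> \<le> (\<Sum>c\<in>D. f c)" by (rule sum_mono) (auto simp: D_def)
  also have "\<dots> = card (\<Union>c\<in>D. {y \<in> A. \<chi> y = c})"
    unfolding f_def by (rule card_UN_disjoint[symmetric]) (use fD fA in auto)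
  also have "\<dots> \<le> card A" by (rule card_mono[OF fA]) auto
  finally have D2: "2 * card D \<le> card A" .
  have "card (C - D) = card C - card D" using card_Diff_subset[OF fD DC] .
  moreover have "card D \<le> card C" using card_mono[OF fC DC] .
  ultimately have "2 + card A \<le> 2 * card (C - D)" using AP Cge D2 by linarith
  hence "2 + real (card A) \<le> 2 * real (card (C - D))" by linarith
  thus ?thesis unfolding BU A_def[symmetric] by simp
qed

end
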